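(* Let $\kappa_l=1$ for all $l\ge1$, and for even $N\ge4$ let $\gamma_0(N)=\sum_{n=0}^{N-1}|f_N(k_n)|$ with $f_N(k)=2\sum_{l=1}^{N/2-1}\sin(kl)+1$ and $k_n=(2n+1)\pi/N$. Then there exist constants $0<c\le C$ and $N_0$ such that $c\,N\ln N\le\gamma_0(N)\le C\,N\ln N$ for all even $N\ge N_0$. Consequently $I_0(\Delta)=[\gamma_0(N)/2]^2T^2$ scales as $T^2N^2(\ln N)^2$ (super-Heisenberg scaling).
   Context: $T>0$ is the probe time; $I_0(\Delta)=[\gamma_0(N)/2]^2T^2$ is the optimally controlled quantum Fisher information for estimating the pairing strength $\Delta$ in the long-range Kitaev chain with decay law $\kappa_l$. *)

theory Defs
  imports "HOL-Analysis.Analysis"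
begin

text \<open>Decay law kappa_l = 1 for all l >= 1 is built in: the couplings all equal 1.\<close>

definition fN :: "nat \<Rightarrow> real \<Rightarrow> real" where
  "fN N k = 2 * (\<Sum>l = 1..N div 2 - 1. sin (k * real l)) + 1"

definition kn :: "nat \<Rightarrow> nat \<Rightarrow> real" where
  "kn N n = (2 * real n + 1) * pi / real N"

definition gamma0 :: "nat \<Rightarrow> real" where
  "gamma0 N = (\<Sum>n<N. \<bar>fN N (kn N n)\<bar>)"

definition I0 :: "nat \<Rightarrow> real \<Rightarrow> real" where
  "I0 N T = (gamma0 N / 2)^2 * T^2"

end

theory Submission
  imports Defs
begin

lemma sin_sum_id:
  "2 * sin (k/2) * (\<Sum>l = 1..m. sin (k * real l)) = cos (k/2) - cos ((real m + 1/2) * k)"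
proof (induction m)
  case 0 then show ?case by simp
next
  case (Suc m)
  have e1: "(real m + 1/2) * k = k * (real m + 1) - k/2" by (simp add: algebra_simps)
  have e2: "(real (Suc m) + 1/2) * k = k * (real m + 1) + k/2" by (simp add: algebra_simps)
  have g: "\<And>A B::real. 2 * sin B * sin A = cos (A - B) - cos (A + B)"
    by (simp add: cos_add cos_diff)
  have "2 * sin (k/2) * sin (k * real (Suc m)) = cos ((real m + 1/2) * k) - cos ((real (Suc m) + 1/2) * k)"
    unfolding e1 e2 using g[of "k/2" "k * (real m + 1)"] by (simp add: algebra_simps)
  then show ?case using Suc by (simp add: distrib_left)
qed

lemma fN_closed:
  assumes "even N" "N \<ge> 4" "n < N"
  shows "fN N (kn N n) = cos (kn N n / 2) / sin (kn N n / 2) + 1 - sin (real (N div 2) * kn N n)"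
proof -
  define k where "k = kn N n"
  define M where "M = N div 2"
  have NM: "real N = 2 * real M" using assms unfolding M_def by auto
  have M1: "M \<ge> 1" using assms unfolding M_def by auto
  have Mk: "real M * k = real n * pi + pi/2"
    unfolding k_def kn_def using NM M1 by (simp add: field_simps)
  have cM: "cos (real M * k) = 0" unfolding Mk by (simp add: cos_add)
  have kpos: "0 < k/2" unfolding k_def kn_def using assms by simp
  have "(2*real n+1)*pi < (2*real N)*pi" using assms by (intro mult_strict_right_mono) auto
  then have klt: "k/2 < pi" unfolding k_def kn_def using assms by (simp add: field_simps)
  have sp: "sin (k/2) > 0" using sin_gt_zero kpos klt by auto
  have r: "real (M - 1) + 1/2 = real M - 1/2" using M1 by (simp add: of_nat_diff)
  have "cos ((real (M - 1) + 1/2) * k) = sin (real M * k) * sin (k/2)"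
    unfolding r by (simp add: left_diff_distrib cos_diff cM)
  then have "2 * (\<Sum>l = 1..M - 1. sin (k * real l)) = cos (k/2)/sin(k/2) - sin (real M * k)"
    using sin_sum_id[of k "M - 1"] sp by (simp add: field_simps)
  then show ?thesis unfolding fN_def k_def M_def by simp
qed

lemma sin_ge_xcos:
  fixes x :: real assumes "0 < x" "x \<le> pi" shows "x * cos x \<le> sin x"
proof -
  obtain z where z: "0 < z" "z < x" "sin x - sin 0 = (x - 0) * cos z"
    using MVT2[of 0 x sin cos] assms by (auto intro: DERIV_sin)
  have "cos x \<le> cos z" using z assms by (intro cos_monotone_0_pi_le) auto
  then show ?thesis using z assms by (simp add: mult_left_mono)
qed

lemma sin_ge_half:
  fixes x :: real assumes "0 < x" "x \<le> pi/2" shows "x/2 \<le> sin x"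
proof -
  have s2: "sin x = 2 * sin (x/2) * cos (x/2)" using sin_double[of "x/2"] by simp
  have a: "(x/2) * cos (x/2) \<le> sin (x/2)" using assms by (intro sin_ge_xcos) auto
  have c: "cos (pi/4) \<le> cos (x/2)" using assms by (intro cos_monotone_0_pi_le) auto
  have c0: "0 \<le> cos (x/2)" using assms by (intro cos_ge_zero) auto
  have "x * cos (x/2) * cos (x/2) = 2 * ((x/2) * cos (x/2)) * cos (x/2)" by simp
  also have "\<dots> \<le> 2 * sin (x/2) * cos (x/2)" using a c0 by (intro mult_right_mono) auto
  finally have "sin x \<ge> x * cos (x/2) * cos (x/2)" using s2 by simp
  moreover have "cos (x/2) * cos (x/2) \<ge> 1/2"
  proof -
    have "cos (x/2) * cos (x/2) \<ge> (sqrt 2 / 2) * (sqrt 2 / 2)"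
      using c cos_45 c0 by (intro mult_mono) auto
    then show ?thesis by simp
  qed
  moreover have "x * (1/2) \<le> x * (cos (x/2) * cos (x/2))"
    using calculation(2) assms by (intro mult_left_mono) auto
  ultimately show ?thesis by (simp add: mult.assoc)
qed

lemma harm_le_ln: "n \<ge> 1 \<Longrightarrow> harm n \<le> 1 + ln (real n)"
proof (induction n rule: dec_induct)
  case base then show ?case by (simp add: harm_def)
next
  case (step m)
  have m0: "real m > 0" using step by simp
  have "ln (real m / real (Suc m)) \<le> real m / real (Suc m) - 1"
    using m0 by (intro ln_le_minus_one) simp
  then have "1 / real (Suc m) \<le> ln (real (Suc m)) - ln (real m)"
    using m0 by (simp add: ln_div field_simps)
  then show ?case using step by (simp add: harm_Suc inverse_eq_divide)
qed


lemma inv_sin_bound: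
  assumes "0 < x" "x < pi" "x \<le> pi/2 \<Longrightarrow> 2 / x \<le> A" "x \<ge> pi/2 \<Longrightarrow> 2 / (pi - x) \<le> B"
    "0 \<le> A" "0 \<le> B"
  shows "1 / sin x \<le> A + B"
proof (cases "x \<le> pi/2")
  case True
  have "x/2 \<le> sin x" using sin_ge_half assms True by auto
  then have "1 / sin x \<le> 1 / (x/2)" using assms by (intro divide_left_mono) auto
  then show ?thesis using assms True by simp
next
  case False
  have "(pi - x)/2 \<le> sin (pi - x)" using assms False by (intro sin_ge_half) auto
  then have "1 / sin x \<le> 1 / ((pi - x)/2)" using assms by (intro divide_left_mono) auto
  then show ?thesis using assms False by simp
qed

lemma term_upper:
  assumes "even N" "N \<ge> 4" "n < N"
  shows "\<bar>fN N (kn N n)\<bar> \<le> 2 + 2 * real N / (real n + 1) + 2 * real N / (real N - real n)"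
proof -
  define x where "x = kn N n / 2"
  have Npos: "real N > 0" using assms by simp
  have x: "x = (2 * real n + 1) * pi / (2 * real N)" unfolding x_def kn_def by simp
  have x0: "0 < x" unfolding x using Npos by simp
  have "(2*real n+1)*pi < (2*real N)*pi" using assms by (intro mult_strict_right_mono) auto
  then have xpi: "x < pi" unfolding x using Npos by (simp add: field_simps)
  have sp: "sin x > 0" using x0 xpi sin_gt_zero by auto
  have f: "fN N (kn N n) = cos x / sin x + 1 - sin (real (N div 2) * kn N n)"
    using fN_closed[OF assms] unfolding x_def .
  have "\<bar>fN N (kn N n)\<bar> \<le> \<bar>cos x\<bar> / sin x + 2"
  proof -
    have a: "\<bar>sin (real (N div 2) * kn N n)\<bar> \<le> 1" by (rule abs_sin_le_one)
    have "\<bar>cos x / sin x\<bar> = \<bar>cos x\<bar> / sin x" using sp by simp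
    then show ?thesis unfolding f using a by linarith
  qed
  also have "\<bar>cos x\<bar> / sin x \<le> 1 / sin x" using sp abs_cos_le_one[of x] by (intro divide_right_mono) auto
  also have "1 / sin x \<le> 2 * real N / (real n + 1) + 2 * real N / (real N - real n)"
  proof (rule inv_sin_bound[OF x0 xpi])
    have "2 / x = 4 * real N / ((2 * real n + 1) * pi)" unfolding x by simp
    also have "\<dots> \<le> 2 * real N / (real n + 1)"
    proof -
      have "2 * (real n + 1) \<le> (2 * real n + 1) * 2" by simp
      also have "\<dots> \<le> (2 * real n + 1) * pi" using pi_gt3 by (intro mult_left_mono) auto
      finally have "2 * real N * (2 * (real n + 1)) \<le> 2 * real N * ((2 * real n + 1) * pi)"
        using Npos by (intro mult_left_mono) auto
      then have "4 * real N * (real n + 1) \<le> 2 * real N * ((2 * real n + 1) * pi)"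
        by (simp add: algebra_simps)
      then show ?thesis using Npos by (simp add: divide_simps)
    qed
    finally show "2 / x \<le> 2 * real N / (real n + 1)" .
  next
    have d: "real N - real n \<ge> 1" using assms by simp
    have "pi - x = (2 * (real N - real n) - 1) * pi / (2 * real N)"
      unfolding x using Npos by (simp add: field_simps)
    then have "2 / (pi - x) = 4 * real N / ((2 * (real N - real n) - 1) * pi)" by simp
    also have "\<dots> \<le> 2 * real N / (real N - real n)"
    proof -
      have "2 * (real N - real n) \<le> (2 * (real N - real n) - 1) * 2" using d by simp
      also have "\<dots> \<le> (2 * (real N - real n) - 1) * pi" using pi_gt3 d by (intro mult_left_mono) auto
      finally have "2 * real N * (2 * (real N - real n)) \<le> 2 * real N * ((2 * (real N - real n) - 1) * pi)"
        using Npos by (intro mult_left_mono) auto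
      then have "4 * real N * (real N - real n) \<le> 2 * real N * ((2 * (real N - real n) - 1) * pi)"
        by (simp add: algebra_simps)
      then show ?thesis using Npos d by (simp add: divide_simps)
    qed
    finally show "2 / (pi - x) \<le> 2 * real N / (real N - real n)" .
  next
    show "0 \<le> 2 * real N / (real n + 1)" by simp
    show "0 \<le> 2 * real N / (real N - real n)" using assms by simp
  qed
  finally show ?thesis by simp
qed

lemma term_lower:
  assumes "even N" "N \<ge> 4" "n < N div 4"
  shows "real N / (2 * pi * (real n + 1)) \<le> \<bar>fN N (kn N n)\<bar>"
proof -
  define x where "x = kn N n / 2"
  have nN: "n < N" using assms by simp
  have Npos: "real N > 0" using assms by simp
  have x: "x = (2 * real n + 1) * pi / (2 * real N)" unfolding x_def kn_def by simp
  have x0: "0 < x" unfolding x using Npos by simp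
  have "4 * n + 4 \<le> N" using assms by simp
  then have "(2*real n+1)*4 \<le> 2*real N" by simp
  then have "(2*real n+1)*pi*4 \<le> (2*real N)*pi" using pi_gt_zero
    by (metis mult.commute mult.left_commute mult_le_cancel_left_pos)
  then have xpi: "x \<le> pi/4" unfolding x using Npos by (simp add: field_simps)
  have sp: "sin x > 0" using x0 xpi sin_gt_zero by auto
  have sx: "sin x \<le> x" using x0 sin_x_le_x by auto
  have cx: "cos x \<ge> 1/2" using cos_monotone_0_pi_le[of x "pi/3"] cos_60 x0 xpi by auto
  have f: "fN N (kn N n) = cos x / sin x + 1 - sin (real (N div 2) * kn N n)"
    using fN_closed[OF assms(1,2) nN] unfolding x_def .
  have "(1/2) / x \<le> cos x / sin x" using sp sx cx x0 by (intro frac_le) auto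
  also have "cos x / sin x \<le> \<bar>fN N (kn N n)\<bar>"
  proof -
    have a: "sin (real (N div 2) * kn N n) \<le> 1" by (rule sin_le_one)
    have "cos x / sin x \<ge> 0" using sp cx by simp
    then show ?thesis unfolding f using a by linarith
  qed
  finally have "(1/2)/x \<le> \<bar>fN N (kn N n)\<bar>" .
  moreover have "real N / (2 * pi * (real n + 1)) \<le> (1/2)/x"
    unfolding x using Npos by (simp add: divide_simps)
  ultimately show ?thesis by linarith
qed


lemma harm_eq: "(\<Sum>n<N. 1 / (real n + 1)) = (harm N :: real)"
  by (simp add: harm_altdef inverse_eq_divide add.commute)

lemma rev_harm: "(\<Sum>n<N. 1 / (real N - real n)) = (harm N :: real)"
proof -
  have "(\<Sum>n<N. 1 / (real n + 1)) = (\<Sum>n<N. 1 / (real (N - Suc n) + 1))"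
    using sum.atLeastLessThan_rev[of "\<lambda>n. 1 / (real n + 1)" 0 N] by (simp add: lessThan_atLeast0)
  also have "\<dots> = (\<Sum>n<N. 1 / (real N - real n))"
    by (intro sum.cong) (auto simp: of_nat_diff)
  finally show ?thesis using harm_eq by simp
qed

lemma gamma_upper:
  assumes "even N" "N \<ge> 4"
  shows "gamma0 N \<le> 10 * real N * ln (real N)"
proof -
  have "gamma0 N \<le> (\<Sum>n<N. 2 + 2 * real N / (real n + 1) + 2 * real N / (real N - real n))"
    unfolding gamma0_def using term_upper[OF assms] by (intro sum_mono) auto
  also have "\<dots> = 2 * real N + 2 * real N * (\<Sum>n<N. 1 / (real n + 1)) + 2 * real N * (\<Sum>n<N. 1 / (real N - real n))"
    by (simp add: sum.distrib sum_distrib_left)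
  also have "\<dots> = 2 * real N + 4 * real N * harm N" by (simp add: harm_eq rev_harm)
  also have "\<dots> \<le> 2 * real N + 4 * real N * (1 + ln (real N))"
    using harm_le_ln[of N] assms by (intro add_left_mono mult_left_mono) auto
  also have "\<dots> \<le> 10 * real N * ln (real N)"
  proof -
    have "exp 1 \<le> real N" using exp_le assms by linarith
    then have "ln (exp 1) \<le> ln (real N)" using assms by (intro ln_mono) auto
    then have l: "1 \<le> ln (real N)" by simp
    have "real N * 1 \<le> real N * ln (real N)" using l by (intro mult_left_mono) auto
    then show ?thesis by (simp add: algebra_simps)
  qed
  finally show ?thesis .
qed

lemma gamma_lower:
  assumes "even N" "N \<ge> 16"
  shows "1 / (4 * pi) * real N * ln (real N) \<le> gamma0 N"
proof -
  define m where "m = N div 4"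
  have N4: "N \<ge> 4" using assms by simp
  have "real N / (2 * pi) * ln (real m + 1) \<le> real N / (2 * pi) * harm m"
    using ln_le_harm[of m] by (intro mult_left_mono) auto
  also have "\<dots> = (\<Sum>n<m. real N / (2 * pi * (real n + 1)))"
    by (simp add: harm_eq[symmetric] sum_distrib_left)
  also have "\<dots> \<le> (\<Sum>n<m. \<bar>fN N (kn N n)\<bar>)"
    using term_lower[OF assms(1) N4] unfolding m_def by (intro sum_mono) auto
  also have "\<dots> \<le> gamma0 N" unfolding gamma0_def m_def by (intro sum_mono2) auto
  finally have g: "real N / (2 * pi) * ln (real m + 1) \<le> gamma0 N" .
  have "4 * m + 4 \<ge> N" unfolding m_def by simp
  then have "real N / 4 \<le> real m + 1" by simp
  then have "ln (real N / 4) \<le> ln (real m + 1)" using assms by (intro ln_mono) auto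
  then have l1: "ln (real N) - ln 4 \<le> ln (real m + 1)" using assms by (simp add: ln_div)
  have "ln 16 \<le> ln (real N)" using assms by (intro ln_mono) auto
  moreover have "ln (16::real) = 2 * ln 4" using ln_mult[of 4 4] by simp
  ultimately have "ln (real N) / 2 \<le> ln (real m + 1)" using l1 by simp
  then have "real N / (2 * pi) * (ln (real N) / 2) \<le> real N / (2 * pi) * ln (real m + 1)"
    by (intro mult_left_mono) auto
  then show ?thesis using g by simp
qed

theorem mainTheorem6:
  shows "\<exists>c C (N0::nat). 0 < c \<and> c \<le> C \<and>
           (\<forall>N. even N \<and> N \<ge> 4 \<and> N \<ge> N0 \<longrightarrow>
              c * real N * ln (real N) \<le> gamma0 N \<and>
              gamma0 N \<le> C * real N * ln (real N)) \<and>
           (\<forall>N T. even N \<and> N \<ge> 4 \<and> N \<ge> N0 \<and> T > 0 \<longrightarrow>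
              (c/2)^2 * T^2 * (real N)^2 * (ln (real N))^2 \<le> I0 N T \<and>
              I0 N T \<le> (C/2)^2 * T^2 * (real N)^2 * (ln (real N))^2)"
proof (intro exI conjI allI impI)
  let ?c = "1 / (4 * pi)" and ?C = "10::real"
  show "0 < ?c" by simp
  show "?c \<le> ?C" using pi_gt3 by (simp add: field_simps)
  fix N :: nat
  assume a: "even N \<and> 4 \<le> N \<and> 16 \<le> N"
  show "?c * real N * ln (real N) \<le> gamma0 N" using gamma_lower a by auto
  show "gamma0 N \<le> ?C * real N * ln (real N)" using gamma_upper a by auto
next
  let ?c = "1 / (4 * pi)" and ?C = "10::real"
  fix N :: nat and T :: real
  assume a: "even N \<and> 4 \<le> N \<and> 16 \<le> N \<and> 0 < T"
  have lo: "?c * real N * ln (real N) \<le> gamma0 N" using gamma_lower a by auto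
  have hi: "gamma0 N \<le> ?C * real N * ln (real N)" using gamma_upper a by auto
  have l0: "0 \<le> ln (real N)" using a by simp
  have p0: "0 \<le> ?c * real N * ln (real N)" using l0 by simp
  have "(?c * real N * ln (real N) / 2)^2 \<le> (gamma0 N / 2)^2"
    using lo p0 by (intro power_mono) auto
  then have "(?c * real N * ln (real N) / 2)^2 * T^2 \<le> (gamma0 N / 2)^2 * T^2"
    by (intro mult_right_mono) auto
  then show "(?c/2)^2 * T^2 * (real N)^2 * (ln (real N))^2 \<le> I0 N T"
    unfolding I0_def by (simp add: power_mult_distrib power_divide algebra_simps)
  have "(gamma0 N / 2)^2 \<le> (?C * real N * ln (real N) / 2)^2"
    using hi lo p0 by (intro power_mono) auto
  then have "(gamma0 N / 2)^2 * T^2 \<le> (?C * real N * ln (real N) / 2)^2 * T^2"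
    by (intro mult_right_mono) auto
  then show "I0 N T \<le> (?C/2)^2 * T^2 * (real N)^2 * (ln (real N))^2"
    unfolding I0_def by (simp add: power_mult_distrib power_divide algebra_simps)
qed

end
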